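(* Let $G$ be a locally finite quasi-transitive graph. Then $G$ has a periodic orientation if and only if there is a subgroup $\Gamma\subseteq\mathrm{Aut}(G)$ acting quasi-transitively on $V(G)$ such that no element of $\Gamma$ inverts an edge of $G$.
   Context: Locally finite: all degrees finite; quasi-transitive: finitely many $\mathrm{Aut}(G)$-orbits on $V(G)$; a group acts quasi-transitively if it has finitely many orbits on $V(G)$. An automorphism $g$ inverts an edge $uv$ if $g(u)=v$ and $g(v)=u$. An orientation of $G$ is periodic if the subgroup of automorphisms mapping every edge to an edge with the same orientation has finitely many orbits on $V(G)$. *)

theory Defs
  imports Main
begin

text \<open>A (simple, undirected) graph with vertex set the whole type 'a,
  given by a symmetric irreflexive adjacency relation E.\<close>

definition simple_graph :: "('a \<Rightarrow> 'a \<Rightarrow> bool) \<Rightarrow> bool" where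
  "simple_graph E \<longleftrightarrow> (\<forall>u v. E u v \<longrightarrow> E v u) \<and> (\<forall>v. \<not> E v v)"

definition locally_finite :: "('a \<Rightarrow> 'a \<Rightarrow> bool) \<Rightarrow> bool" where
  "locally_finite E \<longleftrightarrow> (\<forall>v. finite {u. E v u})"

definition Aut :: "('a \<Rightarrow> 'a \<Rightarrow> bool) \<Rightarrow> ('a \<Rightarrow> 'a) set" where
  "Aut E = {f. bij f \<and> (\<forall>u v. E u v \<longleftrightarrow> E (f u) (f v))}"

definition orbit :: "('a \<Rightarrow> 'a) set \<Rightarrow> 'a \<Rightarrow> 'a set" where
  "orbit \<Gamma> v = (\<lambda>g. g v) ` \<Gamma>"

definition acts_quasi_transitively :: "('a \<Rightarrow> 'a) set \<Rightarrow> bool" where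
  "acts_quasi_transitively \<Gamma> \<longleftrightarrow> finite (range (orbit \<Gamma>))"

definition quasi_transitive :: "('a \<Rightarrow> 'a \<Rightarrow> bool) \<Rightarrow> bool" where
  "quasi_transitive E \<longleftrightarrow> acts_quasi_transitively (Aut E)"

definition subgroup_Aut :: "('a \<Rightarrow> 'a) set \<Rightarrow> ('a \<Rightarrow> 'a \<Rightarrow> bool) \<Rightarrow> bool" where
  "subgroup_Aut \<Gamma> E \<longleftrightarrow> \<Gamma> \<subseteq> Aut E \<and> id \<in> \<Gamma> \<and>
     (\<forall>f\<in>\<Gamma>. \<forall>g\<in>\<Gamma>. f \<circ> g \<in> \<Gamma>) \<and> (\<forall>f\<in>\<Gamma>. inv f \<in> \<Gamma>)"

definition inverts_edge :: "('a \<Rightarrow> 'a \<Rightarrow> bool) \<Rightarrow> ('a \<Rightarrow> 'a) \<Rightarrow> 'a \<Rightarrow> 'a \<Rightarrow> bool" where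
  "inverts_edge E g u v \<longleftrightarrow> E u v \<and> g u = v \<and> g v = u"

definition orientation :: "('a \<Rightarrow> 'a \<Rightarrow> bool) \<Rightarrow> ('a \<Rightarrow> 'a \<Rightarrow> bool) \<Rightarrow> bool" where
  "orientation E D \<longleftrightarrow> (\<forall>u v. D u v \<longrightarrow> E u v) \<and>
     (\<forall>u v. E u v \<longrightarrow> (D u v \<longleftrightarrow> \<not> D v u))"

definition orientation_preserving :: "('a \<Rightarrow> 'a \<Rightarrow> bool) \<Rightarrow> ('a \<Rightarrow> 'a \<Rightarrow> bool) \<Rightarrow> ('a \<Rightarrow> 'a) set" where
  "orientation_preserving E D = {g \<in> Aut E. \<forall>u v. D u v \<longrightarrow> D (g u) (g v)}"

definition periodic_orientation :: "('a \<Rightarrow> 'a \<Rightarrow> bool) \<Rightarrow> ('a \<Rightarrow> 'a \<Rightarrow> bool) \<Rightarrow> bool" where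
  "periodic_orientation E D \<longleftrightarrow> orientation E D \<and>
     acts_quasi_transitively (orientation_preserving E D)"

end

theory Submission
  imports Defs
begin

lemma inv_comp_id: "bij f \<Longrightarrow> inv f (f x) = x" by (simp add: bij_is_inj)
lemma comp_inv_id: "bij f \<Longrightarrow> f (inv f x) = x" by (simp add: bij_is_surj surj_f_inv_f)

lemma orbit_shift:
  assumes grp: "\<forall>f\<in>G. \<forall>g\<in>G. f \<circ> g \<in> G" "\<forall>f\<in>G. inv f \<in> G" "\<forall>f\<in>G. bij f"
    and g: "g \<in> G"
  shows "orbit G (g v) = orbit G v"
proof
  show "orbit G (g v) \<subseteq> orbit G v"
  proof
    fix x assume "x \<in> orbit G (g v)"
    then obtain h where h: "h \<in> G" "x = h (g v)" unfolding orbit_def by auto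
    hence "x = (h \<circ> g) v" by simp
    thus "x \<in> orbit G v" using h g grp unfolding orbit_def by blast
  qed
next
  show "orbit G v \<subseteq> orbit G (g v)"
  proof
    fix x assume "x \<in> orbit G v"
    then obtain h where h: "h \<in> G" "x = h v" unfolding orbit_def by auto
    have "bij g" using g grp by blast
    hence "x = (h \<circ> inv g) (g v)" using h inv_comp_id[of g v] by simp
    moreover have "h \<circ> inv g \<in> G" using h g grp by blast
    ultimately show "x \<in> orbit G (g v)" unfolding orbit_def by blast
  qed
qed

lemma qt_mono:
  assumes sub: "G \<subseteq> G'" and idG: "id \<in> G"
    and grp: "\<forall>f\<in>G'. \<forall>g\<in>G'. f \<circ> g \<in> G'" "\<forall>f\<in>G'. inv f \<in> G'" "\<forall>f\<in>G'. bij f"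
    and qt: "acts_quasi_transitively G"
  shows "acts_quasi_transitively G'"
proof -
  have "range (orbit G') \<subseteq> (\<lambda>S. orbit G' (SOME x. x \<in> S)) ` range (orbit G)"
  proof
    fix O' assume "O' \<in> range (orbit G')"
    then obtain v where v: "O' = orbit G' v" by auto
    have "id v \<in> orbit G v" using idG unfolding orbit_def by (rule imageI)
    hence "v \<in> orbit G v" by simp
    hence "(SOME x. x \<in> orbit G v) \<in> orbit G v" by (rule someI)
    then obtain g where g: "g \<in> G" "(SOME x. x \<in> orbit G v) = g v" unfolding orbit_def by auto
    have "orbit G' (g v) = orbit G' v" using orbit_shift[OF grp] g sub by blast
    thus "O' \<in> (\<lambda>S. orbit G' (SOME x. x \<in> S)) ` range (orbit G)"
      using v g by (metis rangeI image_eqI)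
  qed
  thus ?thesis using qt unfolding acts_quasi_transitively_def by (meson finite_imageI finite_subset)
qed

lemma op_group:
  assumes D: "orientation E D"
  shows "subgroup_Aut (orientation_preserving E D) E"
proof -
  let ?G = "orientation_preserving E D"
  have sg: "subgroup_Aut ?G E"
    unfolding subgroup_Aut_def
  proof (intro conjI ballI)
    show "?G \<subseteq> Aut E" unfolding orientation_preserving_def by auto
    show "id \<in> ?G" unfolding orientation_preserving_def Aut_def by auto
  next
    fix f g assume "f \<in> ?G" "g \<in> ?G"
    thus "f \<circ> g \<in> ?G" unfolding orientation_preserving_def Aut_def
      using bij_comp by auto
  next
    fix f assume f: "f \<in> ?G"
    hence bf: "bij f" and ef: "\<forall>u v. E u v \<longleftrightarrow> E (f u) (f v)" and df: "\<forall>u v. D u v \<longrightarrow> D (f u) (f v)"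
      unfolding orientation_preserving_def Aut_def by auto
    have bi: "bij (inv f)" using bf by (simp add: bij_imp_bij_inv)
    have ei: "E u v \<longleftrightarrow> E (inv f u) (inv f v)" for u v
      using ef comp_inv_id[OF bf] by metis
    have di: "D (inv f u) (inv f v)" if "D u v" for u v
    proof -
      have euv: "E u v" using that D unfolding orientation_def by blast
      hence e2: "E (inv f u) (inv f v)" using ei by blast
      show ?thesis
      proof (rule ccontr)
        assume "\<not> D (inv f u) (inv f v)"
        hence "D (inv f v) (inv f u)" using e2 D unfolding orientation_def by blast
        hence "D v u" using df comp_inv_id[OF bf] by metis
        thus False using that euv D unfolding orientation_def by blast
      qed
    qed
    show "inv f \<in> ?G" unfolding orientation_preserving_def Aut_def using bi ei di by auto
  qed
  thus ?thesis .
qed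

theorem lemma2p10:
  fixes E :: "'a \<Rightarrow> 'a \<Rightarrow> bool"
  assumes "simple_graph E" and "locally_finite E" and "quasi_transitive E"
  shows "(\<exists>D. periodic_orientation E D) \<longleftrightarrow>
         (\<exists>\<Gamma>. subgroup_Aut \<Gamma> E \<and> acts_quasi_transitively \<Gamma> \<and>
              (\<forall>g\<in>\<Gamma>. \<forall>u v. \<not> inverts_edge E g u v))"
proof
  assume "\<exists>D. periodic_orientation E D"
  then obtain D where D: "orientation E D" "acts_quasi_transitively (orientation_preserving E D)"
    unfolding periodic_orientation_def by blast
  let ?G = "orientation_preserving E D"
  have sg: "subgroup_Aut ?G E" using op_group[OF D(1)] .
  have ni: "\<forall>g\<in>?G. \<forall>u v. \<not> inverts_edge E g u v"
  proof (intro ballI allI notI)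
    fix g u v assume g: "g \<in> ?G" and inv: "inverts_edge E g u v"
    hence e: "E u v" "g u = v" "g v = u" unfolding inverts_edge_def by auto
    have dg: "\<forall>u v. D u v \<longrightarrow> D (g u) (g v)" using g unfolding orientation_preserving_def by auto
    show False
    proof (cases "D u v")
      case True then have "D v u" using dg e by metis
      thus False using True e D(1) unfolding orientation_def by blast
    next
      case False then have "D v u" using e D(1) unfolding orientation_def by blast
      hence "D u v" using dg e by metis
      thus False using False by blast
    qed
  qed
  show "\<exists>\<Gamma>. subgroup_Aut \<Gamma> E \<and> acts_quasi_transitively \<Gamma> \<and>
              (\<forall>g\<in>\<Gamma>. \<forall>u v. \<not> inverts_edge E g u v)" using sg D(2) ni by blast
next
  assume "\<exists>\<Gamma>. subgroup_Aut \<Gamma> E \<and> acts_quasi_transitively \<Gamma> \<and>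
              (\<forall>g\<in>\<Gamma>. \<forall>u v. \<not> inverts_edge E g u v)"
  then obtain G where sg: "subgroup_Aut G E" and qt: "acts_quasi_transitively G"
    and ni: "\<forall>g\<in>G. \<forall>u v. \<not> inverts_edge E g u v" by blast
  have GA: "G \<subseteq> Aut E" and idG: "id \<in> G" and cG: "\<forall>f\<in>G. \<forall>g\<in>G. f \<circ> g \<in> G"
    and iG: "\<forall>f\<in>G. inv f \<in> G" using sg unfolding subgroup_Aut_def by auto
  have bG: "\<And>g. g \<in> G \<Longrightarrow> bij g" using GA unfolding Aut_def by auto
  have eG: "\<And>g u v. g \<in> G \<Longrightarrow> E u v \<longleftrightarrow> E (g u) (g v)" using GA unfolding Aut_def by auto
  define C where "C = (\<lambda>u v. {(g u, g v) | g. g \<in> G} \<union> {(g v, g u) | g. g \<in> G})"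
  define R where "R = (\<lambda>u v. SOME p. p \<in> C u v)"
  define D where "D = (\<lambda>u v. E u v \<and> (\<exists>g\<in>G. (g (fst (R u v)), g (snd (R u v))) = (u, v)))"
  have Csym: "C u v = C v u" for u v unfolding C_def by blast
  have Rsym: "R u v = R v u" for u v unfolding R_def using Csym by simp
  have Rin: "R u v \<in> C u v" for u v
  proof -
    have "(id u, id v) \<in> C u v" unfolding C_def using idG by blast
    hence "(u, v) \<in> C u v" by simp
    thus ?thesis unfolding R_def by (rule someI)
  qed
  have Cshift: "C (h u) (h v) = C u v" if h: "h \<in> G" for h u v
  proof
    show "C (h u) (h v) \<subseteq> C u v"
    proof
      fix p assume "p \<in> C (h u) (h v)"
      then obtain g where g: "g \<in> G" "p = ((g \<circ> h) u, (g \<circ> h) v) \<or> p = ((g \<circ> h) v, (g \<circ> h) u)"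
        unfolding C_def by auto
      moreover have "g \<circ> h \<in> G" using g h cG by blast
      ultimately show "p \<in> C u v" unfolding C_def by blast
    qed
  next
    show "C u v \<subseteq> C (h u) (h v)"
    proof
      fix p assume "p \<in> C u v"
      then obtain g where g: "g \<in> G" "p = (g u, g v) \<or> p = (g v, g u)"
        unfolding C_def by auto
      hence "p = ((g \<circ> inv h) (h u), (g \<circ> inv h) (h v)) \<or> p = ((g \<circ> inv h) (h v), (g \<circ> inv h) (h u))"
        using inv_comp_id[OF bG[OF h]] by simp
      moreover have "g \<circ> inv h \<in> G" using g h cG iG by blast
      ultimately show "p \<in> C (h u) (h v)" unfolding C_def by blast
    qed
  qed
  have orient: "orientation E D"
    unfolding orientation_def
  proof (intro conjI allI impI)
    fix u v assume "D u v" thus "E u v" unfolding D_def by simp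
  next
    fix u v assume euv: "E u v"
    obtain a b where ab: "R u v = (a, b)" by fastforce
    have ab2: "R v u = (a, b)" using ab Rsym by simp
    have evu: "E v u" using euv assms(1) unfolding simple_graph_def by blast
    have noboth: False if g: "g \<in> G" "(g a, g b) = (u, v)" and h: "h \<in> G" "(h a, h b) = (v, u)" for g h
    proof -
      have "inv g u = a" "inv g v = b" using g inv_comp_id[OF bG[OF g(1)]] by auto
      hence "(h \<circ> inv g) u = v" "(h \<circ> inv g) v = u" using h by auto
      moreover have "h \<circ> inv g \<in> G" using g h cG iG by blast
      ultimately show False using ni euv unfolding inverts_edge_def by blast
    qed
    have one: "(\<exists>g\<in>G. (g a, g b) = (u, v)) \<or> (\<exists>g\<in>G. (g a, g b) = (v, u))"
    proof -
      from Rin[of u v] ab obtain g where g: "g \<in> G" "(a, b) = (g u, g v) \<or> (a, b) = (g v, g u)"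
        unfolding C_def by auto
      have ig: "inv g \<in> G" using g iG by blast
      from g(2) show ?thesis
      proof
        assume "(a, b) = (g u, g v)"
        hence "(inv g a, inv g b) = (u, v)" using inv_comp_id[OF bG[OF g(1)]] by simp
        thus ?thesis using ig by blast
      next
        assume "(a, b) = (g v, g u)"
        hence "(inv g a, inv g b) = (v, u)" using inv_comp_id[OF bG[OF g(1)]] by simp
        thus ?thesis using ig by blast
      qed
    qed
    show "D u v \<longleftrightarrow> \<not> D v u"
      unfolding D_def using ab ab2 euv evu one noboth by auto
  qed
  have GD: "G \<subseteq> orientation_preserving E D"
  proof
    fix h assume h: "h \<in> G"
    have "D (h u) (h v)" if d: "D u v" for u v
    proof -
      have R: "R (h u) (h v) = R u v" unfolding R_def using Cshift[OF h] by simp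
      from d obtain g where g: "g \<in> G" "E u v" "(g (fst (R u v)), g (snd (R u v))) = (u, v)"
        unfolding D_def by blast
      have "h \<circ> g \<in> G" using g h cG by blast
      moreover have "((h \<circ> g) (fst (R u v)), (h \<circ> g) (snd (R u v))) = (h u, h v)" using g by simp
      moreover have "E (h u) (h v)" using eG[OF h] g by blast
      ultimately show ?thesis unfolding D_def R by blast
    qed
    thus "h \<in> orientation_preserving E D" unfolding orientation_preserving_def using h GA by auto
  qed
  have OG: "\<forall>f\<in>orientation_preserving E D. \<forall>g\<in>orientation_preserving E D. f \<circ> g \<in> orientation_preserving E D"
    "\<forall>f\<in>orientation_preserving E D. inv f \<in> orientation_preserving E D"
    "\<forall>f\<in>orientation_preserving E D. bij f"
    using op_group[OF orient] unfolding subgroup_Aut_def Aut_def by auto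
  have "acts_quasi_transitively (orientation_preserving E D)"
    using qt_mono[OF GD idG OG qt] .
  thus "\<exists>D. periodic_orientation E D" using orient unfolding periodic_orientation_def by blast
qed

end
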